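(* Let $\mathcal{S}$ be a finite thick generalized quadrangle of order $(s,t)$ with a group $G$ of automorphisms acting regularly on the points. Then for each $g\in G$ with $g^2\ne 1$, \[|\mathcal{L}_2(g)|<(1+st)(2+\sqrt{s+t}),\] where $\mathcal{L}_2(g)$ is the set of lines $\ell$ such that $\ell^g$ and $\ell$ are distinct concurrent lines.
   Context: A generalized quadrangle of order $(s,t)$: each line has $s+1$ points, each point is on $t+1$ lines, and for each non-incident point-line pair $(P,\ell)$ there is a unique point on $\ell$ collinear with $P$; it is thick if $\min\{s,t\}\ge 2$. *)

theory Defs
  imports Complex_Main "HOL-Combinatorics.Permutations"
begin

text \<open>A finite incidence structure is given by a point set P and a set L of lines,
each line being represented by its set of points.\<close>

definition collinear :: "'p set set \<Rightarrow> 'p \<Rightarrow> 'p \<Rightarrow> bool" where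
  "collinear L x y \<longleftrightarrow> (\<exists>m\<in>L. x \<in> m \<and> y \<in> m)"

definition GQ :: "'p set \<Rightarrow> 'p set set \<Rightarrow> nat \<Rightarrow> nat \<Rightarrow> bool" where
  "GQ P L s t \<longleftrightarrow>
     (\<forall>l\<in>L. l \<subseteq> P \<and> card l = s + 1) \<and>
     (\<forall>x\<in>P. card {l\<in>L. x \<in> l} = t + 1) \<and>
     (\<forall>l\<in>L. \<forall>m\<in>L. l \<noteq> m \<longrightarrow> card (l \<inter> m) \<le> 1) \<and>
     (\<forall>x\<in>P. \<forall>l\<in>L. x \<notin> l \<longrightarrow> (\<exists>!y. y \<in> l \<and> collinear L x y))"

definition thick_GQ :: "'p set \<Rightarrow> 'p set set \<Rightarrow> nat \<Rightarrow> nat \<Rightarrow> bool" where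
  "thick_GQ P L s t \<longleftrightarrow> GQ P L s t \<and> min s t \<ge> 2"

definition automorphism :: "'p set \<Rightarrow> 'p set set \<Rightarrow> ('p \<Rightarrow> 'p) \<Rightarrow> bool" where
  "automorphism P L g \<longleftrightarrow> g permutes P \<and> (\<forall>l. l \<subseteq> P \<longrightarrow> (g ` l \<in> L \<longleftrightarrow> l \<in> L))"

definition automorphism_group :: "'p set \<Rightarrow> 'p set set \<Rightarrow> ('p \<Rightarrow> 'p) set \<Rightarrow> bool" where
  "automorphism_group P L G \<longleftrightarrow>
     (\<forall>g\<in>G. automorphism P L g) \<and> id \<in> G \<and>
     (\<forall>g\<in>G. \<forall>h\<in>G. g \<circ> h \<in> G) \<and> (\<forall>g\<in>G. inv g \<in> G)"

definition acts_regularly :: "'p set \<Rightarrow> ('p \<Rightarrow> 'p) set \<Rightarrow> bool" where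
  "acts_regularly P G \<longleftrightarrow> (\<forall>x\<in>P. \<forall>y\<in>P. \<exists>!g. g \<in> G \<and> g x = y)"

definition L2 :: "'p set set \<Rightarrow> ('p \<Rightarrow> 'p) \<Rightarrow> 'p set set" where
  "L2 L g = {l\<in>L. g ` l \<noteq> l \<and> g ` l \<inter> l \<noteq> {}}"

end

theory Submission
  imports Defs
begin

lemma GQ_D1: "GQ P L s t \<Longrightarrow> \<forall>l\<in>L. l \<subseteq> P \<and> card l = s + 1"
  unfolding GQ_def by (elim conjE)

lemma GQ_D2: "GQ P L s t \<Longrightarrow> \<forall>x\<in>P. card {l\<in>L. x \<in> l} = t + 1"
  unfolding GQ_def by (elim conjE)

lemma GQ_D3: "GQ P L s t \<Longrightarrow> \<forall>l\<in>L. \<forall>m\<in>L. l \<noteq> m \<longrightarrow> card (l \<inter> m) \<le> 1"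
  unfolding GQ_def by (elim conjE)

lemma GQ_D4: "GQ P L s t \<Longrightarrow> \<forall>x\<in>P. \<forall>l\<in>L. x \<notin> l \<longrightarrow> (\<exists>!y. y \<in> l \<and> collinear L x y)"
  unfolding GQ_def by (elim conjE)

lemma GQ_sub: "GQ P L s t \<Longrightarrow> l \<in> L \<Longrightarrow> l \<subseteq> P"
  using GQ_D1 by blast

lemma GQ_card_line: "GQ P L s t \<Longrightarrow> l \<in> L \<Longrightarrow> card l = s + 1"
  using GQ_D1 by blast

lemma GQ_fin_line: "GQ P L s t \<Longrightarrow> l \<in> L \<Longrightarrow> finite l"
  using GQ_card_line[of P L s t l] card.infinite[of l] by fastforce

lemma GQ_card_pt: "GQ P L s t \<Longrightarrow> x \<in> P \<Longrightarrow> card {l\<in>L. x \<in> l} = t + 1"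
  using GQ_D2 by blast

lemma GQ_finL: "GQ P L s t \<Longrightarrow> finite P \<Longrightarrow> finite L"
proof -
  assume a: "GQ P L s t" "finite P"
  have "L \<subseteq> Pow P" using GQ_sub[OF a(1)] by blast
  thus ?thesis using a(2) finite_subset by blast
qed

lemma GQ_two: 
  assumes "GQ P L s t" "l \<in> L" "m \<in> L" "p \<in> l" "q \<in> l" "p \<in> m" "q \<in> m" "p \<noteq> q"
  shows "l = m"
proof (rule ccontr)
  assume "l \<noteq> m"
  hence "card (l \<inter> m) \<le> 1" using assms(2,3) GQ_D3[OF assms(1)] by blast
  moreover have "{p,q} \<subseteq> l \<inter> m" using assms by blast
  moreover have "finite (l \<inter> m)" using GQ_fin_line[OF assms(1,2)] by blast
  ultimately have "card {p,q} \<le> 1" by (meson card_mono order_trans)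
  thus False using assms(8) by simp
qed

lemma GQ_uniq:
  assumes "GQ P L s t" "x \<in> P" "l \<in> L" "x \<notin> l"
  shows "\<exists>!y. y \<in> l \<and> collinear L x y"
  using assms GQ_D4 by blast

lemma GQ_K1nat:
  assumes G: "GQ P L s t" and l: "l \<in> L" and q: "q \<in> P"
  shows "(\<Sum>p\<in>l. card {m\<in>L. p \<in> m \<and> q \<in> m}) = (if q \<in> l then s + t + 1 else 1)"
proof (cases "q \<in> l")
  case True
  have fl: "finite l" using GQ_fin_line[OF G l] .
  have "(\<Sum>p\<in>l. card {m\<in>L. p \<in> m \<and> q \<in> m})
        = card {m\<in>L. q \<in> m \<and> q \<in> m} + (\<Sum>p\<in>l-{q}. card {m\<in>L. p \<in> m \<and> q \<in> m})"
    using sum.remove[OF fl True] by blast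
  moreover have "card {m\<in>L. q \<in> m \<and> q \<in> m} = t + 1" using GQ_card_pt[OF G q] by simp
  moreover have "\<forall>p\<in>l-{q}. {m\<in>L. p \<in> m \<and> q \<in> m} = {l}"
  proof
    fix p assume p: "p \<in> l - {q}"
    show "{m\<in>L. p \<in> m \<and> q \<in> m} = {l}"
    proof
      show "{m\<in>L. p \<in> m \<and> q \<in> m} \<subseteq> {l}"
        using GQ_two[OF G l _ _ True] p by blast
      show "{l} \<subseteq> {m\<in>L. p \<in> m \<and> q \<in> m}" using p l True by blast
    qed
  qed
  hence "(\<Sum>p\<in>l-{q}. card {m\<in>L. p \<in> m \<and> q \<in> m}) = (\<Sum>p\<in>l-{q}. 1)"
    by (intro sum.cong) auto
  moreover have "(\<Sum>p\<in>l-{q}. (1::nat)) = s"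
    using GQ_card_line[OF G l] True fl by simp
  ultimately show ?thesis using True by simp
next
  case False
  obtain y where y: "y \<in> l" "collinear L q y" and uq: "\<And>z. z \<in> l \<Longrightarrow> collinear L q z \<Longrightarrow> z = y"
    using GQ_uniq[OF G q l False] by blast
  have fl: "finite l" using GQ_fin_line[OF G l] .
  have "\<forall>p\<in>l. card {m\<in>L. p \<in> m \<and> q \<in> m} = (if p = y then 1 else 0)"
  proof
    fix p assume p: "p \<in> l"
    show "card {m\<in>L. p \<in> m \<and> q \<in> m} = (if p = y then 1 else 0)"
    proof (cases "p = y")
      case True
      obtain m where m: "m \<in> L" "q \<in> m" "y \<in> m" using y(2) unfolding collinear_def by blast
      have "q \<noteq> y" using y(1) False by blast
      have "{m\<in>L. p \<in> m \<and> q \<in> m} = {m}"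
        using m GQ_two[OF G m(1) _ m(2) m(3)] \<open>q \<noteq> y\<close> True by blast
      thus ?thesis using True by simp
    next
      case F2: False
      have "{m\<in>L. p \<in> m \<and> q \<in> m} = {}"
      proof (rule ccontr)
        assume "{m\<in>L. p \<in> m \<and> q \<in> m} \<noteq> {}"
        then obtain m where "m \<in> L" "p \<in> m" "q \<in> m" by blast
        hence "collinear L q p" unfolding collinear_def by blast
        thus False using uq[OF p] F2 by blast
      qed
      hence E: "{m\<in>L. p \<in> m \<and> q \<in> m} = {}" .
      show ?thesis by (subst E) (simp add: F2)
    qed
  qed
  hence "(\<Sum>p\<in>l. card {m\<in>L. p \<in> m \<and> q \<in> m}) = (\<Sum>p\<in>l. (if p = y then 1 else 0))"
    by (intro sum.cong) auto
  also have "\<dots> = 1" using fl y(1) by simp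
  finally show ?thesis using False by simp
qed

definition lam :: "'p set set \<Rightarrow> 'p \<Rightarrow> 'p \<Rightarrow> real" where
  "lam L p q = (\<Sum>m\<in>L. of_bool (p \<in> m \<and> q \<in> m))"

lemma lam_card: "finite L \<Longrightarrow> lam L p q = real (card {m\<in>L. p \<in> m \<and> q \<in> m})"
proof -
  assume fL: "finite L"
  have e: "L \<inter> {m. p \<in> m \<and> q \<in> m} = {m\<in>L. p \<in> m \<and> q \<in> m}" by blast
  have "(\<Sum>m\<in>L. of_bool (p \<in> m \<and> q \<in> m)::real) = of_nat (card (L \<inter> {m. p \<in> m \<and> q \<in> m}))"
    by (rule sum_of_bool_eq[OF fL fL])
  thus ?thesis unfolding lam_def e .
qed

lemma lam_sym: "lam L p q = lam L q p"
  unfolding lam_def by (simp add: conj_commute)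

lemma restrict_sum:
  fixes f :: "'p \<Rightarrow> real"
  assumes fP: "finite P" and sub: "l \<subseteq> P"
  shows "(\<Sum>p\<in>P. of_bool (p \<in> l) * f p) = sum f l"
proof -
  have "(\<Sum>p\<in>P. of_bool (p \<in> l) * f p) = (\<Sum>p\<in>P. if p \<in> l then f p else 0)"
    by (intro sum.cong) auto
  also have "\<dots> = sum f (P \<inter> l)" by (rule sum.inter_restrict[OF fP, symmetric])
  also have "P \<inter> l = l" using sub by blast
  finally show ?thesis .
qed

lemma GQ_K1:
  assumes G: "GQ P L s t" and fP: "finite P" and l: "l \<in> L" and q: "q \<in> P"
  shows "(\<Sum>p\<in>l. lam L p q) = real (s + t) * of_bool (q \<in> l) + 1"
proof -
  have fL: "finite L" using GQ_finL[OF G fP] .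
  have "(\<Sum>p\<in>l. lam L p q) = (\<Sum>p\<in>l. real (card {m\<in>L. p \<in> m \<and> q \<in> m}))"
    using lam_card[OF fL] by simp
  also have "\<dots> = real (\<Sum>p\<in>l. card {m\<in>L. p \<in> m \<and> q \<in> m})" by simp
  also have "\<dots> = real (if q \<in> l then s + t + 1 else 1)" using GQ_K1nat[OF G l q] by simp
  finally show ?thesis by simp
qed

lemma GQ_K3:
  assumes G: "GQ P L s t" and fP: "finite P" and q: "q \<in> P" and r: "r \<in> P"
  shows "(\<Sum>p\<in>P. lam L q p * lam L p r) = real (s + t) * lam L q r + real (t + 1)"
proof -
  have fL: "finite L" using GQ_finL[OF G fP] .
  have "(\<Sum>p\<in>P. lam L q p * lam L p r) = (\<Sum>p\<in>P. \<Sum>m\<in>L. of_bool (q \<in> m \<and> p \<in> m) * lam L p r)"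
  proof (intro sum.cong refl)
    fix p
    show "lam L q p * lam L p r = (\<Sum>m\<in>L. of_bool (q \<in> m \<and> p \<in> m) * lam L p r)"
      unfolding lam_def[of L q p] by (rule sum_distrib_right)
  qed
  also have "\<dots> = (\<Sum>m\<in>L. \<Sum>p\<in>P. of_bool (q \<in> m \<and> p \<in> m) * lam L p r)" by (rule sum.swap)
  also have "\<dots> = (\<Sum>m\<in>L. of_bool (q \<in> m) * (\<Sum>p\<in>m. lam L p r))"
  proof (intro sum.cong refl)
    fix m assume m: "m \<in> L"
    have "(\<Sum>p\<in>P. of_bool (q \<in> m \<and> p \<in> m) * lam L p r) = of_bool (q \<in> m) * (\<Sum>p\<in>P. of_bool (p \<in> m) * lam L p r)"
      by (cases "q \<in> m") simp_all
    also have "\<dots> = of_bool (q \<in> m) * (\<Sum>p\<in>m. lam L p r)"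
      using restrict_sum[OF fP GQ_sub[OF G m], of "\<lambda>p. lam L p r"] by simp
    finally show "(\<Sum>p\<in>P. of_bool (q \<in> m \<and> p \<in> m) * lam L p r) = of_bool (q \<in> m) * (\<Sum>p\<in>m. lam L p r)" .
  qed
  also have "\<dots> = (\<Sum>m\<in>L. real (s + t) * of_bool (q \<in> m \<and> r \<in> m) + of_bool (q \<in> m))"
  proof (intro sum.cong refl)
    fix m assume m: "m \<in> L"
    show "of_bool (q \<in> m) * (\<Sum>p\<in>m. lam L p r) = real (s + t) * of_bool (q \<in> m \<and> r \<in> m) + of_bool (q \<in> m)"
      using GQ_K1[OF G fP m r] by (cases "q \<in> m") simp_all
  qed
  also have "\<dots> = real (s + t) * (\<Sum>m\<in>L. of_bool (q \<in> m \<and> r \<in> m)) + (\<Sum>m\<in>L. of_bool (q \<in> m))"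
    by (simp add: sum.distrib sum_distrib_left)
  also have "(\<Sum>m\<in>L. of_bool (q \<in> m \<and> r \<in> m)) = lam L q r" unfolding lam_def ..
  also have "(\<Sum>m\<in>L. (of_bool (q \<in> m)::real)) = real (t + 1)"
  proof -
    have e2: "L \<inter> {m. q \<in> m} = {l\<in>L. q \<in> l}" by blast
    have "(\<Sum>m\<in>L. (of_bool (q \<in> m)::real)) = of_nat (card (L \<inter> {m. q \<in> m}))"
      by (rule sum_of_bool_eq[OF fL fL])
    thus ?thesis unfolding e2 GQ_card_pt[OF G q] .
  qed
  finally show ?thesis .
qed

lemma W_eq:
  fixes v :: "'p \<Rightarrow> real"
  assumes G: "GQ P L s t" and fP: "finite P"
  shows "(\<Sum>l\<in>L. (\<Sum>p\<in>l. v p)^2) = (\<Sum>p\<in>P. \<Sum>q\<in>P. v p * v q * lam L p q)"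
proof -
  have fL: "finite L" using GQ_finL[OF G fP] .
  have step: "(\<Sum>p\<in>l. v p)^2 = (\<Sum>p\<in>P. \<Sum>q\<in>P. of_bool (p \<in> l \<and> q \<in> l) * (v p * v q))" if l: "l \<in> L" for l
  proof -
    have sub: "l \<subseteq> P" using GQ_sub[OF G l] .
    have "(\<Sum>p\<in>l. v p)^2 = (\<Sum>p\<in>l. \<Sum>q\<in>l. v p * v q)" by (simp add: power2_eq_square sum_product)
    also have "\<dots> = (\<Sum>p\<in>P. of_bool (p \<in> l) * (\<Sum>q\<in>l. v p * v q))"
      using restrict_sum[OF fP sub, of "\<lambda>p. \<Sum>q\<in>l. v p * v q"] by simp
    also have "\<dots> = (\<Sum>p\<in>P. of_bool (p \<in> l) * (\<Sum>q\<in>P. of_bool (q \<in> l) * (v p * v q)))"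
      using restrict_sum[OF fP sub] by simp
    also have "\<dots> = (\<Sum>p\<in>P. \<Sum>q\<in>P. of_bool (p \<in> l \<and> q \<in> l) * (v p * v q))"
    proof (intro sum.cong refl)
      fix p
      show "of_bool (p \<in> l) * (\<Sum>q\<in>P. of_bool (q \<in> l) * (v p * v q)) = (\<Sum>q\<in>P. of_bool (p \<in> l \<and> q \<in> l) * (v p * v q))"
        by (cases "p \<in> l") simp_all
    qed
    finally show ?thesis .
  qed
  have "(\<Sum>l\<in>L. (\<Sum>p\<in>l. v p)^2) = (\<Sum>l\<in>L. \<Sum>p\<in>P. \<Sum>q\<in>P. of_bool (p \<in> l \<and> q \<in> l) * (v p * v q))"
    using step by (intro sum.cong) auto
  also have "\<dots> = (\<Sum>p\<in>P. \<Sum>l\<in>L. \<Sum>q\<in>P. of_bool (p \<in> l \<and> q \<in> l) * (v p * v q))" by (rule sum.swap)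
  also have "\<dots> = (\<Sum>p\<in>P. \<Sum>q\<in>P. \<Sum>l\<in>L. of_bool (p \<in> l \<and> q \<in> l) * (v p * v q))"
    by (rule sum.cong[OF refl], rule sum.swap)
  also have "\<dots> = (\<Sum>p\<in>P. \<Sum>q\<in>P. v p * v q * lam L p q)"
  proof (intro sum.cong refl)
    fix p q
    show "(\<Sum>l\<in>L. of_bool (p \<in> l \<and> q \<in> l) * (v p * v q)) = v p * v q * lam L p q"
      unfolding lam_def by (simp add: sum_distrib_left sum_distrib_right mult.commute)
  qed
  finally show ?thesis .
qed

lemma quad:
  fixes v :: "'p \<Rightarrow> real"
  assumes G: "GQ P L s t" and fP: "finite P" and st: "s + t > 0" and v0: "(\<Sum>p\<in>P. v p) = 0"
  shows "(\<Sum>l\<in>L. (\<Sum>p\<in>l. v p)^2) \<le> real (s + t) * (\<Sum>p\<in>P. (v p)^2)"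
proof -
  define W where "W = (\<Sum>p\<in>P. \<Sum>q\<in>P. v p * v q * lam L p q)"
  define u where "u p = (\<Sum>q\<in>P. lam L p q * v q)" for p
  define a where "a = real (s + t)"
  have apos: "a > 0" unfolding a_def using st by (simp only: of_nat_0_less_iff)
  have vu: "(\<Sum>p\<in>P. v p * u p) = W" unfolding u_def W_def
    by (simp add: sum_distrib_left mult_ac)
  have uu: "(\<Sum>p\<in>P. (u p)^2) = a * W"
  proof -
    have "(\<Sum>p\<in>P. (u p)^2) = (\<Sum>p\<in>P. \<Sum>q\<in>P. \<Sum>r\<in>P. (lam L p q * v q) * (lam L p r * v r))"
      unfolding u_def by (simp add: power2_eq_square sum_product)
    also have "\<dots> = (\<Sum>q\<in>P. \<Sum>p\<in>P. \<Sum>r\<in>P. (lam L p q * v q) * (lam L p r * v r))" by (rule sum.swap)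
    also have "\<dots> = (\<Sum>q\<in>P. \<Sum>r\<in>P. \<Sum>p\<in>P. (lam L p q * v q) * (lam L p r * v r))"
      by (rule sum.cong[OF refl], rule sum.swap)
    also have "\<dots> = (\<Sum>q\<in>P. \<Sum>r\<in>P. v q * v r * (\<Sum>p\<in>P. lam L q p * lam L p r))"
    proof (intro sum.cong refl)
      fix q r
      have "(\<Sum>p\<in>P. (lam L p q * v q) * (lam L p r * v r)) = (\<Sum>p\<in>P. v q * v r * (lam L q p * lam L p r))"
      proof (intro sum.cong refl)
        fix p
        show "(lam L p q * v q) * (lam L p r * v r) = v q * v r * (lam L q p * lam L p r)"
          using lam_sym[of L q p] by simp
      qed
      also have "\<dots> = v q * v r * (\<Sum>p\<in>P. lam L q p * lam L p r)" by (rule sum_distrib_left[symmetric])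
      finally show "(\<Sum>p\<in>P. (lam L p q * v q) * (lam L p r * v r)) = v q * v r * (\<Sum>p\<in>P. lam L q p * lam L p r)" .
    qed
    also have "\<dots> = (\<Sum>q\<in>P. \<Sum>r\<in>P. a * (v q * v r * lam L q r) + real (t + 1) * (v q * v r))"
    proof (intro sum.cong refl)
      fix q r assume q: "q \<in> P" and r: "r \<in> P"
      show "v q * v r * (\<Sum>p\<in>P. lam L q p * lam L p r) = a * (v q * v r * lam L q r) + real (t + 1) * (v q * v r)"
        unfolding GQ_K3[OF G fP q r] a_def by (simp add: algebra_simps)
    qed
    also have "\<dots> = a * W"
    proof -
      have "(\<Sum>q\<in>P. \<Sum>r\<in>P. a * (v q * v r * lam L q r) + real (t + 1) * (v q * v r))
          = (\<Sum>q\<in>P. \<Sum>r\<in>P. a * (v q * v r * lam L q r)) + (\<Sum>q\<in>P. \<Sum>r\<in>P. real (t + 1) * (v q * v r))"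
        by (simp add: sum.distrib)
      also have "(\<Sum>q\<in>P. \<Sum>r\<in>P. a * (v q * v r * lam L q r)) = a * W"
        unfolding W_def by (simp add: sum_distrib_left)
      also have "(\<Sum>q\<in>P. \<Sum>r\<in>P. real (t + 1) * (v q * v r)) = 0"
      proof -
        have "(\<Sum>r\<in>P. real (t + 1) * (v q * v r)) = real (t + 1) * v q * (\<Sum>r\<in>P. v r)" for q
          by (simp add: sum_distrib_left mult.assoc)
        thus ?thesis using v0 by simp
      qed
      finally show ?thesis by simp
    qed
    finally show ?thesis .
  qed
  have "0 \<le> (\<Sum>p\<in>P. (u p - a * v p)^2)" by (simp add: sum_nonneg)
  also have "(\<Sum>p\<in>P. (u p - a * v p)^2) = (\<Sum>p\<in>P. (u p)^2 - 2 * a * (v p * u p) + a^2 * (v p)^2)"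
    by (intro sum.cong refl) (simp add: power2_eq_square algebra_simps)
  also have "\<dots> = (\<Sum>p\<in>P. (u p)^2) - 2 * a * (\<Sum>p\<in>P. v p * u p) + a^2 * (\<Sum>p\<in>P. (v p)^2)"
    by (simp add: sum.distrib sum_subtractf sum_distrib_left)
  also have "\<dots> = a * (a * (\<Sum>p\<in>P. (v p)^2) - W)" unfolding uu vu by (simp add: power2_eq_square algebra_simps)
  finally have "0 \<le> a * (a * (\<Sum>p\<in>P. (v p)^2) - W)" .
  hence "W \<le> a * (\<Sum>p\<in>P. (v p)^2)" using apos by (simp add: zero_le_mult_iff)
  thus ?thesis unfolding W_eq[OF G fP] W_def[symmetric] a_def .
qed

lemma lam_row:
  assumes G: "GQ P L s t" and fP: "finite P" and p: "p \<in> P"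
  shows "(\<Sum>q\<in>P. lam L p q) = real ((s + 1) * (t + 1))"
proof -
  have fL: "finite L" using GQ_finL[OF G fP] .
  have "(\<Sum>q\<in>P. lam L p q) = (\<Sum>q\<in>P. \<Sum>m\<in>L. of_bool (p \<in> m) * of_bool (q \<in> m))"
    unfolding lam_def by (intro sum.cong refl) (simp add: of_bool_conj)
  also have "\<dots> = (\<Sum>m\<in>L. \<Sum>q\<in>P. of_bool (p \<in> m) * of_bool (q \<in> m))" by (rule sum.swap)
  also have "\<dots> = (\<Sum>m\<in>L. of_bool (p \<in> m) * real (s + 1))"
  proof (intro sum.cong refl)
    fix m assume m: "m \<in> L"
    have "(\<Sum>q\<in>P. of_bool (p \<in> m) * of_bool (q \<in> m)) = (\<Sum>q\<in>P. of_bool (q \<in> m) * (of_bool (p \<in> m)::real))"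
      by (intro sum.cong refl) (rule mult.commute)
    also have "\<dots> = sum (\<lambda>_. of_bool (p \<in> m)) m"
      by (rule restrict_sum[OF fP GQ_sub[OF G m]])
    also have "\<dots> = of_bool (p \<in> m) * real (s + 1)" using GQ_card_line[OF G m] by simp
    finally show "(\<Sum>q\<in>P. of_bool (p \<in> m) * of_bool (q \<in> m)) = of_bool (p \<in> m) * real (s + 1)" .
  qed
  also have "\<dots> = real (s + 1) * (\<Sum>m\<in>L. of_bool (p \<in> m))" by (simp add: sum_distrib_left mult.commute)
  also have "(\<Sum>m\<in>L. (of_bool (p \<in> m)::real)) = real (t + 1)"
  proof -
    have e2: "L \<inter> {m. p \<in> m} = {l\<in>L. p \<in> l}" by blast
    have "(\<Sum>m\<in>L. (of_bool (p \<in> m)::real)) = of_nat (card (L \<inter> {m. p \<in> m}))"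
      by (rule sum_of_bool_eq[OF fL fL])
    thus ?thesis unfolding e2 GQ_card_pt[OF G p] .
  qed
  finally show ?thesis by (simp add: algebra_simps)
qed

lemma card_P:
  assumes G: "GQ P L s t" and fP: "finite P" and ne: "P \<noteq> {}"
  shows "real (card P) = real (s + 1) * (1 + real s * real t)"
proof -
  obtain x where x: "x \<in> P" using ne by blast
  have "card {l\<in>L. x \<in> l} = t + 1" using GQ_card_pt[OF G x] .
  hence "{l\<in>L. x \<in> l} \<noteq> {}" by (metis card.empty nat.distinct(1) Suc_eq_plus1)
  then obtain l where l: "l \<in> L" by blast
  have sub: "l \<subseteq> P" using GQ_sub[OF G l] .
  have "(\<Sum>q\<in>P. \<Sum>p\<in>l. lam L p q) = (\<Sum>q\<in>P. real (s + t) * of_bool (q \<in> l) + 1)"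
    using GQ_K1[OF G fP l] by (intro sum.cong) auto
  also have "\<dots> = real (s + t) * (\<Sum>q\<in>P. of_bool (q \<in> l) * 1) + real (card P)"
    by (simp add: sum.distrib sum_distrib_left)
  also have "(\<Sum>q\<in>P. of_bool (q \<in> l) * (1::real)) = sum (\<lambda>_. 1) l"
    by (rule restrict_sum[OF fP sub])
  also have "\<dots> = real (s + 1)" using GQ_card_line[OF G l] by simp
  finally have A: "(\<Sum>q\<in>P. \<Sum>p\<in>l. lam L p q) = real (s + t) * real (s + 1) + real (card P)" .
  have "(\<Sum>q\<in>P. \<Sum>p\<in>l. lam L p q) = (\<Sum>p\<in>l. \<Sum>q\<in>P. lam L p q)" by (rule sum.swap)
  also have "\<dots> = (\<Sum>p\<in>l. real ((s + 1) * (t + 1)))"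
    using lam_row[OF G fP] sub by (intro sum.cong) auto
  also have "\<dots> = real (s + 1) * real ((s + 1) * (t + 1))" using GQ_card_line[OF G l] by simp
  finally have B: "(\<Sum>q\<in>P. \<Sum>p\<in>l. lam L p q) = real (s + 1) * real ((s + 1) * (t + 1))" .
  from A B show ?thesis by (simp add: algebra_simps)
qed

theorem theorem3p4:
  fixes P :: "'p set" and L :: "'p set set" and s t :: nat and G :: "('p \<Rightarrow> 'p) set"
  assumes "finite P"
    and "thick_GQ P L s t"
    and "automorphism_group P L G"
    and "acts_regularly P G"
    and "g \<in> G" and "g \<circ> g \<noteq> id"
  shows "real (card (L2 L g)) < (1 + real s * real t) * (2 + sqrt (real s + real t))"
proof -
  have Gq: "GQ P L s t" using assms(2) unfolding thick_GQ_def by (elim conjE)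
  have st2: "s \<ge> 2" "t \<ge> 2" using assms(2) unfolding thick_GQ_def by auto
  have fP: "finite P" by fact
  have fL: "finite L" using GQ_finL[OF Gq fP] .
  have aut: "automorphism P L g" using assms(3,5) unfolding automorphism_group_def by blast
  have perm: "g permutes P" using aut unfolding automorphism_def by blast
  have autL: "\<And>l. l \<subseteq> P \<Longrightarrow> (g ` l \<in> L \<longleftrightarrow> l \<in> L)" using aut unfolding automorphism_def by blast
  have gP: "\<And>x. x \<in> P \<Longrightarrow> g x \<in> P" using permutes_in_image[OF perm] by blast
  have ginj: "inj g" using permutes_inj[OF perm] .
  have gL: "\<And>l. l \<in> L \<Longrightarrow> g ` l \<in> L" using autL GQ_sub[OF Gq] by blast
  have nofix: "g x \<noteq> x" if x: "x \<in> P" for x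
  proof
    assume gx: "g x = x"
    have u: "\<exists>!h. h \<in> G \<and> h x = x" using assms(4) x unfolding acts_regularly_def by blast
    have idG: "id \<in> G" using assms(3) unfolding automorphism_group_def by blast
    obtain h where h: "\<And>h'. h' \<in> G \<and> h' x = x \<Longrightarrow> h' = h" using u by blast
    have "g = h" using h[of g] assms(5) gx by blast
    moreover have "id = h" using h[of id] idG by simp
    ultimately have "g = id" by simp
    thus False using assms(6) by simp
  qed
  define S where "S = L2 L g"
  have S_iff: "\<And>l. l \<in> S \<longleftrightarrow> l \<in> L \<and> g ` l \<noteq> l \<and> g ` l \<inter> l \<noteq> {}" unfolding S_def L2_def by blast
  have SL: "S \<subseteq> L" using S_iff by blast
  have fS: "finite S" using SL fL finite_subset by blast
  define X where "X = {x \<in> P. \<exists>l\<in>S. x \<in> l \<and> g x \<in> l}"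
  have XP: "X \<subseteq> P" unfolding X_def by blast
  have key: "y = x \<or> y = g x" if l: "l \<in> S" and x: "x \<in> l" "g x \<in> l" and y: "y \<in> l"
    and m: "m \<in> L" "y \<in> m" "g y \<in> m" for l x y m
  proof (rule ccontr)
    assume ne: "\<not> (y = x \<or> y = g x)"
    have lL: "l \<in> L" and gl: "g ` l \<noteq> l" using l S_iff by blast+
    have lP: "l \<subseteq> P" using GQ_sub[OF Gq lL] .
    have glL: "g ` l \<in> L" using gL[OF lL] .
    have gxgl: "g x \<in> g ` l" "g y \<in> g ` l" using x y by blast+
    have gxy: "g x \<noteq> g y" using ne injD[OF ginj, of x y] by blast
    show False
    proof (cases "g y \<in> l")
      case True
      have "l = g ` l" using GQ_two[OF Gq lL glL x(2) True gxgl gxy] .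
      thus False using gl by simp
    next
      case False
      have gyP: "g y \<in> P" using gP lP y by blast
      have c1: "collinear L (g y) y" unfolding collinear_def using m by blast
      have c2: "collinear L (g y) (g x)" unfolding collinear_def using glL gxgl by blast
      have "\<exists>!z. z \<in> l \<and> collinear L (g y) z" using GQ_uniq[OF Gq gyP lL False] .
      hence "y = g x" using c1 c2 y x(2) by blast
      thus False using ne by blast
    qed
  qed
  have no2: "g (g x) \<notin> l" if l: "l \<in> S" and x: "x \<in> l" "g x \<in> l" for l x
  proof
    assume g2: "g (g x) \<in> l"
    have lL: "l \<in> L" and gl: "g ` l \<noteq> l" using l S_iff by blast+
    have xP: "x \<in> P" using GQ_sub[OF Gq lL] x by blast
    have ne: "g (g x) \<noteq> g x" using nofix[OF gP[OF xP]] .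
    have a1: "g x \<in> g ` l" "g (g x) \<in> g ` l" using x by blast+
    have "l = g ` l" using GQ_two[OF Gq lL gL[OF lL] x(2) g2 a1 ne[symmetric]] .
    thus False using gl by simp
  qed
  have ex: "\<exists>x. x \<in> l \<and> g x \<in> l" if l: "l \<in> S" for l
  proof -
    have "g ` l \<inter> l \<noteq> {}" using l S_iff by blast
    then obtain z where z: "z \<in> g ` l" "z \<in> l" by blast
    then obtain x where x: "x \<in> l" "z = g x" by blast
    show ?thesis using z x by blast
  qed
  have gS: "g ` l \<in> S" if l: "l \<in> S" for l
  proof -
    have lL: "l \<in> L" and gl: "g ` l \<noteq> l" using l S_iff by blast+
    obtain x where x: "x \<in> l" "g x \<in> l" using ex[OF l] by blast
    have "g ` (g ` l) \<noteq> g ` l" using gl ginj by (simp add: inj_image_eq_iff)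
    moreover have "g (g x) \<in> g ` (g ` l) \<inter> g ` l" using x by blast
    ultimately show ?thesis using S_iff gL[OF lL] by blast
  qed
  have lineX: "l \<inter> X = {x, g x}" if l: "l \<in> S" and x: "x \<in> l" "g x \<in> l" for l x
  proof
    show "l \<inter> X \<subseteq> {x, g x}"
    proof
      fix y assume "y \<in> l \<inter> X"
      then obtain m where "y \<in> l" "m \<in> S" "y \<in> m" "g y \<in> m" unfolding X_def by blast
      thus "y \<in> {x, g x}" using key[OF l x, of y m] SL by blast
    qed
    have lL: "l \<in> L" using l S_iff by blast
    have lP: "l \<subseteq> P" using GQ_sub[OF Gq lL] .
    have "x \<in> X" unfolding X_def using l x lP by blast
    moreover have "g x \<in> g ` l" "g (g x) \<in> g ` l" using x by blast+
    hence "g x \<in> X" unfolding X_def using gS[OF l] x lP gP by blast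
    ultimately show "{x, g x} \<subseteq> l \<inter> X" using x by blast
  qed
  have card2: "card (l \<inter> X) = 2" if l: "l \<in> S" for l
  proof -
    obtain x where x: "x \<in> l" "g x \<in> l" using ex[OF l] by blast
    have lL: "l \<in> L" using l S_iff by blast
    have "x \<in> P" using GQ_sub[OF Gq lL] x by blast
    hence "g x \<noteq> x" using nofix by blast
    thus ?thesis using lineX[OF l x] by simp
  qed
  have cardXS: "card X = card S"
  proof -
    define f where "f l = (SOME x. x \<in> l \<and> g x \<in> l)" for l
    have f: "f l \<in> l \<and> g (f l) \<in> l" if "l \<in> S" for l
      unfolding f_def using someI_ex[OF ex[OF that]] .
    have inj: "inj_on f S"
    proof (rule inj_onI)
      fix l m assume l: "l \<in> S" and m: "m \<in> S" and e: "f l = f m"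
      have lL: "l \<in> L" using l S_iff by blast
      have mL: "m \<in> L" using m S_iff by blast
      have "f l \<in> P" using GQ_sub[OF Gq lL] f[OF l] by blast
      hence ne: "f l \<noteq> g (f l)" using nofix[of "f l"] by auto
      have "f l \<in> m" "g (f l) \<in> m" using f[OF m] e by simp_all
      thus "l = m" using GQ_two[OF Gq lL mL _ _ _ _ ne] f[OF l] by blast
    qed
    have img: "f ` S = X"
    proof
      show "f ` S \<subseteq> X"
      proof
        fix y assume "y \<in> f ` S"
        then obtain l where l: "l \<in> S" and y: "y = f l" by blast
        have lL: "l \<in> L" using l S_iff by blast
        show "y \<in> X" unfolding X_def using f[OF l] l y GQ_sub[OF Gq lL] by blast
      qed
      show "X \<subseteq> f ` S"
      proof
        fix x assume "x \<in> X"
        then obtain l where l: "l \<in> S" and x: "x \<in> l" "g x \<in> l" unfolding X_def by blast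
        have lL: "l \<in> L" using l S_iff by blast
        have fX: "f l \<in> X" unfolding X_def using f[OF l] l GQ_sub[OF Gq lL] by blast
        hence "f l \<in> {x, g x}" using lineX[OF l x] f[OF l] by blast
        moreover have "f l \<noteq> g x"
        proof
          assume "f l = g x"
          hence "g (g x) \<in> l" using f[OF l] by simp
          thus False using no2[OF l x] by blast
        qed
        ultimately have "f l = x" by blast
        thus "x \<in> f ` S" using l by blast
      qed
    qed
    show ?thesis using card_image[OF inj] img by simp
  qed
  have pos: "0 < (1 + real s * real t) * (2 + sqrt (real s + real t))"
    by (intro mult_pos_pos add_pos_nonneg) auto
  show ?thesis
  proof (cases "X = {}")
    case True
    hence "card (L2 L g) = 0" using cardXS S_def by simp
    thus ?thesis using pos by simp
  next
    case False
    have Pne: "P \<noteq> {}" using False XP by blast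
    have fX: "finite X" using XP fP finite_subset by blast
    define n where "n = real (card P)"
    define xi where "xi = real (card X)"
    have npos: "n > 0" using Pne fP unfolding n_def by (simp add: card_gt_0_iff)
    have xipos: "xi > 0" using False fX unfolding xi_def by (simp add: card_gt_0_iff)
    have cardP: "n = real (s + 1) * (1 + real s * real t)" using card_P[OF Gq fP Pne] unfolding n_def .
    define c where "c = xi / n"
    have cn: "c * n = xi" unfolding c_def using npos by simp
    have cpos: "c > 0" unfolding c_def using npos xipos by simp
    define v where "v p = (of_bool (p \<in> X)::real) - c" for p
    have sumX: "(\<Sum>p\<in>P. (of_bool (p \<in> X)::real)) = xi"
    proof -
      have "(\<Sum>p\<in>P. (of_bool (p \<in> X)::real)) = of_nat (card (P \<inter> {p. p \<in> X}))"
        by (rule sum_of_bool_eq[OF fP fP])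
      also have "P \<inter> {p. p \<in> X} = X" using XP by blast
      finally show ?thesis unfolding xi_def by simp
    qed
    have v0: "(\<Sum>p\<in>P. v p) = 0"
    proof -
      have "(\<Sum>p\<in>P. v p) = (\<Sum>p\<in>P. (of_bool (p \<in> X)::real)) - (\<Sum>p\<in>P. c)"
        unfolding v_def by (rule sum_subtractf)
      also have "\<dots> = xi - n * c" unfolding sumX n_def by simp
      finally show ?thesis using cn by (simp add: mult.commute)
    qed
    have vsq: "(\<Sum>p\<in>P. (v p)^2) = xi * (1 - c)"
    proof -
      have "(\<Sum>p\<in>P. (v p)^2) = (\<Sum>p\<in>P. (1 - 2 * c) * (of_bool (p \<in> X)::real) + c^2)"
        unfolding v_def by (intro sum.cong refl) (simp add: power2_eq_square algebra_simps)
      also have "\<dots> = (1 - 2 * c) * (\<Sum>p\<in>P. (of_bool (p \<in> X)::real)) + n * c^2"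
        unfolding n_def by (simp add: sum.distrib sum_distrib_left)
      also have "\<dots> = (1 - 2 * c) * xi + (c * n) * c" unfolding sumX by (simp add: power2_eq_square)
      finally show ?thesis unfolding cn by (simp add: algebra_simps)
    qed
    have lsum: "(\<Sum>p\<in>l. v p) = 2 - c * real (s + 1)" if l: "l \<in> S" for l
    proof -
      have lL: "l \<in> L" using l S_iff by blast
      have fl: "finite l" using GQ_fin_line[OF Gq lL] .
      have "(\<Sum>p\<in>l. v p) = (\<Sum>p\<in>l. (of_bool (p \<in> X)::real)) - (\<Sum>p\<in>l. c)"
        unfolding v_def by (rule sum_subtractf)
      also have "(\<Sum>p\<in>l. (of_bool (p \<in> X)::real)) = of_nat (card (l \<inter> {p. p \<in> X}))"
        by (rule sum_of_bool_eq[OF fl fl])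
      also have "l \<inter> {p. p \<in> X} = l \<inter> X" by blast
      also have "card (l \<inter> X) = 2" using card2[OF l] .
      also have "(\<Sum>p\<in>l. c) = real (card l) * c" by simp
      also have "card l = s + 1" using GQ_card_line[OF Gq lL] .
      finally show ?thesis by (simp add: mult.commute)
    qed
    have stpos: "s + t > 0" using st2 by simp
    have Q: "(\<Sum>l\<in>L. (\<Sum>p\<in>l. v p)^2) \<le> real (s + t) * (\<Sum>p\<in>P. (v p)^2)"
      by (rule quad[OF Gq fP stpos v0])
    have "(\<Sum>l\<in>S. (\<Sum>p\<in>l. v p)^2) \<le> (\<Sum>l\<in>L. (\<Sum>p\<in>l. v p)^2)"
      by (rule sum_mono2[OF fL SL]) simp
    moreover have "(\<Sum>l\<in>S. (\<Sum>p\<in>l. v p)^2) = xi * (2 - c * real (s + 1))^2"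
    proof -
      have "(\<Sum>l\<in>S. (\<Sum>p\<in>l. v p)^2) = (\<Sum>l\<in>S. (2 - c * real (s + 1))^2)"
        using lsum by (intro sum.cong) auto
      also have "\<dots> = real (card S) * (2 - c * real (s + 1))^2" by simp
      finally show ?thesis unfolding xi_def cardXS .
    qed
    ultimately have "xi * (2 - c * real (s + 1))^2 \<le> xi * (real (s + t) * (1 - c))"
      using Q vsq by (simp add: algebra_simps)
    hence A: "(2 - c * real (s + 1))^2 \<le> real (s + t) * (1 - c)"
      using xipos by (simp add: mult_le_cancel_left_pos)
    have rpos: "real (s + t) > 0" using stpos by (simp only: of_nat_0_less_iff)
    have "real (s + t) * c > 0" using rpos cpos by (rule mult_pos_pos)
    hence "real (s + t) * (1 - c) < real (s + t)" by (simp add: algebra_simps)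
    hence B: "(c * real (s + 1) - 2)^2 < real s + real t" using A by (simp add: power2_commute)
    have "\<bar>c * real (s + 1) - 2\<bar> < sqrt (real s + real t)"
      using real_sqrt_less_mono[OF B] by simp
    hence C: "c * real (s + 1) < 2 + sqrt (real s + real t)" by linarith
    have "xi = c * real (s + 1) * (1 + real s * real t)" using cn cardP by (simp add: mult.assoc)
    also have "\<dots> < (2 + sqrt (real s + real t)) * (1 + real s * real t)"
      using C by (intro mult_strict_right_mono) (auto intro: add_pos_nonneg)
    finally have "xi < (1 + real s * real t) * (2 + sqrt (real s + real t))" by (simp add: mult.commute)
    thus ?thesis unfolding xi_def cardXS S_def .
  qed
qed

end
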